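(* In the aggregative setting described in the context, suppose assumptions (i)–(iv) there hold, and define $L_t\triangleq\frac{\mu\max_{i}L_{gi}}{\mu^2+L_a^2}\Big(1-\frac{L_a}{\sqrt{\mu^2+L_a^2}}\Big)^{-1}$. Then for each $i\in\{1,\dots,n\}$ and every $y_i\in\mathcal{R}_i$, $$\|T_i(y_i,z_1)-T_i(y_i,z_2)\|\le L_t\|z_1-z_2\|\quad\text{for all }z_1,z_2\in\mathbb{R}^d.$$
   Context: Aggregative game: $n$ players, each chooses $x_i\in\mathbb{R}^d$; player $i$ has cost $f_i(x_i,\bar x)+r_i(x_i)$ where $\bar x=\sum_jx_j$ and $f_i(x_i,\bar x)=\mathbb{E}[\psi_i(x_i,x_i+\bar x_{-i};\xi_i)]$, $\bar x_{-i}=\sum_{j\ne i}x_j$. Assumptions, for each $i$: (i) $r_i$ is lower semicontinuous and convex with compact effective domain $\mathcal{R}_i$; (ii) for any $y\in\mathbb{R}^d$, $x_i\mapsto f_i(x_i,x_i+y)$ is twice continuously differentiable and convex on $\mathcal{R}_i$; (iii) with $g_i(x_i,y)$ denoting the gradient at $x_i$ of $x_i\mapsto f_i(x_i,x_i+y)$, there is $L_a>0$ such that for any $y\in\mathbb{R}^d$, $\|g_i(x_i,y)-g_i(x_i',y)\|\le L_a\|x_i-x_i'\|$ for $x_i,x_i'\in\mathcal{R}_i$; (iv) for any $x_i\in\mathcal{R}_i$, $\|g_i(x_i,y_1)-g_i(x_i,y_2)\|\le L_{gi}\|y_1-y_2\|$ for all $y_1,y_2\in\mathbb{R}^d$. Fix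 $\mu>0$. For $y_i\in\mathcal{R}_i$, $z\in\mathbb{R}^d$: $T_i(y_i,z)\triangleq\arg\min_{x_i\in\mathbb{R}^d}\big[f_i(x_i,x_i+z-y_i)+r_i(x_i)+\frac\mu2\|x_i-y_i\|^2\big]$ (uniquely defined). *)

theory Defs
  imports "HOL-Analysis.Analysis"
begin

definition eff_dom :: "('a \<Rightarrow> ereal) \<Rightarrow> 'a set" where
  "eff_dom r = {x. r x < \<infinity>}"

definition lsc_fun :: "('a::topological_space \<Rightarrow> ereal) \<Rightarrow> bool" where
  "lsc_fun r \<longleftrightarrow> (\<forall>c::ereal. closed {x. r x \<le> c})"

definition convex_ext :: "('a::real_vector \<Rightarrow> ereal) \<Rightarrow> bool" where
  "convex_ext r \<longleftrightarrow> (\<forall>x y. \<forall>t::real. 0 \<le> t \<and> t \<le> 1 \<longrightarrow>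
      r ((1 - t) *\<^sub>R x + t *\<^sub>R y) \<le> ereal (1 - t) * r x + ereal t * r y)"

definition best_resp ::
  "(nat \<Rightarrow> 'a::real_normed_vector \<Rightarrow> 'a \<Rightarrow> real) \<Rightarrow> (nat \<Rightarrow> 'a \<Rightarrow> ereal) \<Rightarrow> real
     \<Rightarrow> nat \<Rightarrow> 'a \<Rightarrow> 'a \<Rightarrow> 'a" where
  "best_resp f r \<mu> i y z =
     (THE x. \<forall>x'. ereal (f i x (x + z - y)) + r i x + ereal (\<mu> / 2 * (norm (x - y))\<^sup>2)
                 \<le> ereal (f i x' (x' + z - y)) + r i x' + ereal (\<mu> / 2 * (norm (x' - y))\<^sup>2))"

end

theory Submission imports Defs begin


lemma dom_convex:
  assumes nm: "\<And>x. R x \<noteq> -\<infinity>" and cv: "convex_ext R"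
  shows "convex (eff_dom R)"
proof (rule convexI)
  fix a b and u v :: real
  assume a: "a \<in> eff_dom R" and b: "b \<in> eff_dom R" and u: "0 \<le> u" and v: "0 \<le> v" and uv: "u + v = 1"
  have ra: "R a = ereal (real_of_ereal (R a))" using a nm[of a] by (cases "R a") (auto simp: eff_dom_def)
  have rb: "R b = ereal (real_of_ereal (R b))" using b nm[of b] by (cases "R b") (auto simp: eff_dom_def)
  have "R ((1 - v) *\<^sub>R a + v *\<^sub>R b) \<le> ereal (1 - v) * R a + ereal v * R b"
    using cv v uv u unfolding convex_ext_def by auto
  also have "\<dots> < \<infinity>" by (subst ra, subst rb) simp
  finally have "R ((1 - v) *\<^sub>R a + v *\<^sub>R b) < \<infinity>" .
  moreover have "u = 1 - v" using uv by linarith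
  ultimately show "u *\<^sub>R a + v *\<^sub>R b \<in> eff_dom R" by (simp add: eff_dom_def)
qed

lemma exist_min:
  fixes \<phi> :: "'a::topological_space \<Rightarrow> real"
  assumes K: "compact K" "K \<noteq> {}" and cl: "\<And>t. closed {x\<in>K. \<phi> x \<le> t}"
  shows "\<exists>x\<in>K. \<forall>x'\<in>K. \<phi> x \<le> \<phi> x'"
proof -
  have "K \<inter> (\<Inter>x'\<in>K. {x\<in>K. \<phi> x \<le> \<phi> x'}) \<noteq> {}"
  proof (rule compact_imp_fip_image[OF K(1)])
    fix I' assume I': "finite I'" "I' \<subseteq> K"
    show "K \<inter> (\<Inter>x'\<in>I'. {x\<in>K. \<phi> x \<le> \<phi> x'}) \<noteq> {}"
    proof (cases "I' = {}")
      case True then show ?thesis using K by auto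
    next
      case False
      have "Min (\<phi> ` I') \<in> \<phi> ` I'" using I' False by (intro Min_in) auto
      then obtain x0 where x0: "x0 \<in> I'" "\<phi> x0 = Min (\<phi> ` I')" by auto
      have "x0 \<in> K \<inter> (\<Inter>x'\<in>I'. {x\<in>K. \<phi> x \<le> \<phi> x'})"
        using x0 I' by auto
      then show ?thesis by blast
    qed
  qed (rule cl)
  then show ?thesis by blast
qed

lemma closed_sub:
  fixes R :: "'a::metric_space \<Rightarrow> ereal" and c :: "'a \<Rightarrow> real"
  assumes nm: "\<And>x. R x \<noteq> -\<infinity>" and lsc: "lsc_fun R" and K: "compact (eff_dom R)"
    and c: "continuous_on (eff_dom R) c"
  shows "closed {x\<in>eff_dom R. c x + real_of_ereal (R x) \<le> t}"
proof (unfold closed_sequential_limits, intro allI impI, elim conjE)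
  fix s l assume s: "\<forall>n. s n \<in> {x\<in>eff_dom R. c x + real_of_ereal (R x) \<le> t}" and l: "s \<longlonglongrightarrow> l"
  have cK: "closed (eff_dom R)" using K compact_imp_closed by blast
  have lK: "l \<in> eff_dom R" using Lim_in_closed_set[OF cK _ _ l] s by auto
  have fin: "R x = ereal (real_of_ereal (R x))" if "x \<in> eff_dom R" for x
    using that nm[of x] by (cases "R x") (auto simp: eff_dom_def)
  show "l \<in> {x\<in>eff_dom R. c x + real_of_ereal (R x) \<le> t}"
  proof (rule ccontr)
    assume "\<not> ?thesis"
    with lK have gt: "c l + real_of_ereal (R l) > t" by auto
    define e where "e = (c l + real_of_ereal (R l) - t) / 2"
    have e: "e > 0" using gt by (simp add: e_def)
    have ct: "(\<lambda>n. c (s n)) \<longlonglongrightarrow> c l"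
      by (rule continuous_on_tendsto_compose[OF c l lK]) (use s in auto)
    then have ev: "eventually (\<lambda>n. dist (c (s n)) (c l) < e) sequentially"
      using e tendstoD by blast
    have "eventually (\<lambda>n. s n \<in> {x. R x \<le> ereal (t - c l + e)}) sequentially"
    proof (rule eventually_mono[OF ev])
      fix n assume d: "dist (c (s n)) (c l) < e"
      have sn: "s n \<in> eff_dom R" "c (s n) + real_of_ereal (R (s n)) \<le> t" using s by auto
      have "real_of_ereal (R (s n)) \<le> t - c l + e" using sn d by (simp add: dist_real_def abs_less_iff)
      then show "s n \<in> {x. R x \<le> ereal (t - c l + e)}" using fin[OF sn(1)] by (metis ereal_less_eq(3) mem_Collect_eq)
    qed
    moreover have "closed {x. R x \<le> ereal (t - c l + e)}" using lsc unfolding lsc_fun_def by auto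
    ultimately have "l \<in> {x. R x \<le> ereal (t - c l + e)}"
      using Lim_in_closed_set[OF _ _ trivial_limit_sequentially l] by blast
    then have "real_of_ereal (R l) \<le> t - c l + e" using fin[OF lK] by (metis ereal_less_eq(3) mem_Collect_eq)
    moreover have "2 * e = c l + real_of_ereal (R l) - t" by (simp add: e_def)
    ultimately show False using gt e by linarith
  qed
qed


lemma norm_sq_comb:
  fixes a b :: "'a::real_inner"
  shows "(norm ((1 - t) *\<^sub>R a + t *\<^sub>R b))\<^sup>2 = (1 - t) * (norm a)\<^sup>2 + t * (norm b)\<^sup>2 - t * (1 - t) * (norm (a - b))\<^sup>2"
  by (simp only: power2_norm_eq_inner) (simp add: inner_add_left inner_add_right inner_diff_left inner_diff_right inner_commute algebra_simps power2_eq_square)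

lemma strong_min:
  fixes h \<rho> :: "'a::real_inner \<Rightarrow> real"
  assumes K: "convex K" and hc: "convex_on K h"
    and \<rho>c: "\<And>a b t. a \<in> K \<Longrightarrow> b \<in> K \<Longrightarrow> 0 \<le> t \<Longrightarrow> t \<le> 1 \<Longrightarrow> \<rho> ((1 - t) *\<^sub>R a + t *\<^sub>R b) \<le> (1 - t) * \<rho> a + t * \<rho> b"
    and xs: "xs \<in> K" and x: "x \<in> K"
    and mn: "\<And>x'. x' \<in> K \<Longrightarrow> h xs + \<rho> xs + \<mu> / 2 * (norm (xs - y))\<^sup>2 \<le> h x' + \<rho> x' + \<mu> / 2 * (norm (x' - y))\<^sup>2"
  shows "h x + \<rho> x + \<mu> / 2 * (norm (x - y))\<^sup>2 \<ge> h xs + \<rho> xs + \<mu> / 2 * (norm (xs - y))\<^sup>2 + \<mu> / 2 * (norm (x - xs))\<^sup>2"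
proof -
  define \<phi> where "\<phi> x = h x + \<rho> x + \<mu> / 2 * (norm (x - y))\<^sup>2" for x
  define D where "D = (norm (x - xs))\<^sup>2"
  have "\<mu> / 2 * D \<le> \<phi> x - \<phi> xs"
  proof (rule field_le_mult_one_interval)
    fix z :: real assume z: "0 < z" "z < 1"
    define t where "t = 1 - z"
    have t: "0 < t" "t < 1" using z by (auto simp: t_def)
    define p where "p = (1 - t) *\<^sub>R xs + t *\<^sub>R x"
    have pK: "p \<in> K" unfolding p_def using K xs x t by (simp add: convex_alt)
    have h1: "h p \<le> (1 - t) * h xs + t * h x"
      unfolding p_def using convex_onD[OF hc, of t xs x] t xs x by auto
    have r1: "\<rho> p \<le> (1 - t) * \<rho> xs + t * \<rho> x" unfolding p_def using \<rho>c[OF xs x, of t] t by auto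
    have "p - y = (1 - t) *\<^sub>R (xs - y) + t *\<^sub>R (x - y)" unfolding p_def by (simp add: algebra_simps)
    then have q1: "(norm (p - y))\<^sup>2 = (1 - t) * (norm (xs - y))\<^sup>2 + t * (norm (x - y))\<^sup>2 - t * (1 - t) * D"
      by (simp add: norm_sq_comb D_def norm_minus_commute)
    have q2: "\<mu> / 2 * (norm (p - y))\<^sup>2 = (1 - t) * (\<mu> / 2 * (norm (xs - y))\<^sup>2) + t * (\<mu> / 2 * (norm (x - y))\<^sup>2) - \<mu> / 2 * (t * (1 - t) * D)"
      unfolding q1 by (simp add: field_simps)
    have "\<phi> xs \<le> \<phi> p" using mn[OF pK] by (simp add: \<phi>_def)
    also have "\<dots> \<le> (1 - t) * \<phi> xs + t * \<phi> x - \<mu> / 2 * (t * (1 - t) * D)"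
      using h1 r1 q2 unfolding \<phi>_def by (simp add: algebra_simps)
    finally have "t * (\<mu> / 2 * ((1 - t) * D)) \<le> t * (\<phi> x - \<phi> xs)" by (simp add: field_simps)
    then have "\<mu> / 2 * ((1 - t) * D) \<le> \<phi> x - \<phi> xs" using t by simp
    then show "z * (\<mu> / 2 * D) \<le> \<phi> x - \<phi> xs" by (simp add: t_def algebra_simps)
  qed
  then show ?thesis unfolding \<phi>_def D_def by simp
qed


lemma best_min:
  fixes R :: "'a::euclidean_space \<Rightarrow> ereal" and h :: "'a \<Rightarrow> real"
  assumes nm: "\<And>x. R x \<noteq> -\<infinity>" and lsc: "lsc_fun R" and cv: "convex_ext R"
    and K: "compact (eff_dom R)" and y: "y \<in> eff_dom R"
    and hcont: "continuous_on (eff_dom R) h" and hconv: "convex_on (eff_dom R) h"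
    and mu: "\<mu> > 0"
  defines "T \<equiv> (THE x. \<forall>x'. ereal (h x) + R x + ereal (\<mu> / 2 * (norm (x - y))\<^sup>2)
                 \<le> ereal (h x') + R x' + ereal (\<mu> / 2 * (norm (x' - y))\<^sup>2))"
  shows "T \<in> eff_dom R \<and> (\<forall>x'\<in>eff_dom R. h x' + real_of_ereal (R x') + \<mu> / 2 * (norm (x' - y))\<^sup>2
     \<ge> h T + real_of_ereal (R T) + \<mu> / 2 * (norm (T - y))\<^sup>2 + \<mu> / 2 * (norm (x' - T))\<^sup>2)"
proof -
  define K where "K = eff_dom R"
  define \<rho> where "\<rho> x = real_of_ereal (R x)" for x
  define \<phi> where "\<phi> x = h x + \<rho> x + \<mu> / 2 * (norm (x - y))\<^sup>2" for x
  define P where "P x \<longleftrightarrow> (\<forall>x'. ereal (h x) + R x + ereal (\<mu> / 2 * (norm (x - y))\<^sup>2)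
                 \<le> ereal (h x') + R x' + ereal (\<mu> / 2 * (norm (x' - y))\<^sup>2))" for x
  have fin: "R x = ereal (\<rho> x)" if "x \<in> K" for x
    using that nm[of x] by (cases "R x") (auto simp: eff_dom_def K_def \<rho>_def)
  have out: "R x = \<infinity>" if "x \<notin> K" for x
    using that by (auto simp: eff_dom_def K_def)
  have Phi_in: "ereal (h x) + R x + ereal (\<mu> / 2 * (norm (x - y))\<^sup>2) = ereal (\<phi> x)" if "x \<in> K" for x
    using fin[OF that] by (simp add: \<phi>_def)
  have Phi_out: "ereal (h x) + R x + ereal (\<mu> / 2 * (norm (x - y))\<^sup>2) = \<infinity>" if "x \<notin> K" for x
    using out[OF that] by simp
  have Kc: "convex K" unfolding K_def by (rule dom_convex[OF nm cv])
  define c where "c x = h x + \<mu> / 2 * (norm (x - y))\<^sup>2" for x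
  have cc: "continuous_on (eff_dom R) c" unfolding c_def
    by (intro continuous_intros hcont)
  have cl: "closed {x\<in>K. \<phi> x \<le> t}" for t
  proof -
    have "{x\<in>K. \<phi> x \<le> t} = {x\<in>eff_dom R. c x + real_of_ereal (R x) \<le> t}"
      by (auto simp: K_def \<phi>_def c_def \<rho>_def algebra_simps)
    then show ?thesis using closed_sub[OF nm lsc K cc] by simp
  qed
  obtain xs where xs: "xs \<in> K" "\<And>x'. x' \<in> K \<Longrightarrow> \<phi> xs \<le> \<phi> x'"
    using exist_min[of K \<phi>] K y cl unfolding K_def by blast
  have \<rho>c: "\<rho> ((1 - t) *\<^sub>R a + t *\<^sub>R b) \<le> (1 - t) * \<rho> a + t * \<rho> b"
    if a: "a \<in> K" and b: "b \<in> K" and t: "0 \<le> t" "t \<le> 1" for a b t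
  proof -
    have pK: "(1 - t) *\<^sub>R a + t *\<^sub>R b \<in> K" using Kc a b t by (simp add: convex_alt)
    have "R ((1 - t) *\<^sub>R a + t *\<^sub>R b) \<le> ereal (1 - t) * R a + ereal t * R b"
      using cv t unfolding convex_ext_def by auto
    also have "\<dots> = ereal ((1 - t) * \<rho> a + t * \<rho> b)" using fin[OF a] fin[OF b] by simp
    finally show ?thesis using fin[OF pK] by simp
  qed
  have strong: "\<phi> x' \<ge> \<phi> x + \<mu> / 2 * (norm (x' - x))\<^sup>2"
    if "x \<in> K" "\<And>x'. x' \<in> K \<Longrightarrow> \<phi> x \<le> \<phi> x'" "x' \<in> K" for x x'
    using strong_min[OF Kc hconv[folded K_def] \<rho>c that(1) that(3), of \<mu> y] that(2)
    unfolding \<phi>_def by blast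
  have Pxs: "P xs" unfolding P_def
  proof
    fix x' show "ereal (h xs) + R xs + ereal (\<mu> / 2 * (norm (xs - y))\<^sup>2)
                 \<le> ereal (h x') + R x' + ereal (\<mu> / 2 * (norm (x' - y))\<^sup>2)"
      using xs Phi_in Phi_out by (cases "x' \<in> K") auto
  qed
  have uniq: "x = xs" if "P x" for x
  proof -
    have "x \<in> K"
    proof (rule ccontr)
      assume "x \<notin> K"
      have "ereal (h x) + R x + ereal (\<mu> / 2 * (norm (x - y))\<^sup>2)
                 \<le> ereal (h xs) + R xs + ereal (\<mu> / 2 * (norm (xs - y))\<^sup>2)" using that unfolding P_def by blast
      then show False using Phi_in[OF xs(1)] Phi_out[OF \<open>x \<notin> K\<close>] by simp
    qed
    then have m: "\<And>x'. x' \<in> K \<Longrightarrow> \<phi> x \<le> \<phi> x'" using that Phi_in unfolding P_def by (metis ereal_less_eq(3))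
    have "\<phi> xs \<ge> \<phi> x + \<mu> / 2 * (norm (xs - x))\<^sup>2" by (rule strong[OF \<open>x \<in> K\<close> m xs(1)])
    moreover have "\<phi> xs \<le> \<phi> x" using xs \<open>x \<in> K\<close> by blast
    ultimately have "\<mu> / 2 * (norm (xs - x))\<^sup>2 \<le> 0" by linarith
    then have "(norm (xs - x))\<^sup>2 \<le> 0" using mu by (simp add: mult_le_0_iff)
    then show ?thesis by simp
  qed
  have "T = xs" unfolding T_def using Pxs uniq unfolding P_def by (rule the_equality)
  then show ?thesis using xs strong unfolding K_def \<phi>_def \<rho>_def by auto
qed


lemma coef_bound:
  fixes \<mu> La :: real
  assumes mu: "\<mu> > 0" and La: "La > 0"
  shows "1 / \<mu> \<le> \<mu> / (\<mu>\<^sup>2 + La\<^sup>2) * inverse (1 - La / sqrt (\<mu>\<^sup>2 + La\<^sup>2))"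
proof -
  define s where "s = sqrt (\<mu>\<^sup>2 + La\<^sup>2)"
  have s2: "s\<^sup>2 = \<mu>\<^sup>2 + La\<^sup>2" unfolding s_def by simp
  have sLa: "La < s" unfolding s_def using mu La
    by (metis add_pos_pos real_sqrt_abs real_sqrt_less_mono abs_of_pos less_add_same_cancel2 zero_less_power)
  have sp: "s > 0" using sLa La by linarith
  have e: "\<mu> / (\<mu>\<^sup>2 + La\<^sup>2) * inverse (1 - La / s) = \<mu> / (s * (s - La))"
  proof -
    have i: "inverse (1 - La / s) = s / (s - La)" using sLa sp by (simp add: field_simps)
    show ?thesis unfolding i s2[symmetric] using sLa sp by (simp add: field_simps power2_eq_square)
  qed
  have "s * (s - La) \<le> \<mu>\<^sup>2"
  proof -
    have "s * (s - La) = \<mu>\<^sup>2 + La\<^sup>2 - s * La" using s2 by (simp add: algebra_simps power2_eq_square)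
    moreover have "La\<^sup>2 \<le> s * La" using sLa La by (simp add: power2_eq_square)
    ultimately show ?thesis by linarith
  qed
  then have "1 / \<mu> \<le> \<mu> / (s * (s - La))" using mu sLa sp
    by (simp add: field_simps power2_eq_square)
  then show ?thesis using e by (simp add: s_def)
qed


lemma best_resp_eq:
  "best_resp f r \<mu> i y z = (THE x. \<forall>x'. ereal (f i x (x + (z - y))) + r i x + ereal (\<mu> / 2 * (norm (x - y))\<^sup>2)
                 \<le> ereal (f i x' (x' + (z - y))) + r i x' + ereal (\<mu> / 2 * (norm (x' - y))\<^sup>2))"
  by (simp add: best_resp_def add_diff_eq)

lemma final_bound:
  fixes Lg :: "nat \<Rightarrow> real" and Z d \<mu> La :: real
  assumes i: "i \<in> {1..n}" and Lg0: "0 \<le> Lg i" and mu_pos: "\<mu> > 0" and La_pos: "La > 0"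
    and dle: "\<mu> * d \<le> Lg i * Z" and Z: "Z \<ge> 0"
  shows "d \<le> (\<mu> * Max (Lg ` {1..n}) / (\<mu>\<^sup>2 + La\<^sup>2) * inverse (1 - La / sqrt (\<mu>\<^sup>2 + La\<^sup>2))) * Z"
proof -
  have fin: "finite (Lg ` {1..n})" by (rule finite_imageI) (rule finite_atLeastAtMost)
  have LM: "Lg i \<le> Max (Lg ` {1..n})" by (rule Max_ge[OF fin]) (rule imageI[OF i])
  have M0: "Max (Lg ` {1..n}) \<ge> 0" using LM Lg0 by linarith
  have "d \<le> Lg i * Z / \<mu>" unfolding pos_le_divide_eq[OF mu_pos] mult.commute[of d \<mu>] by (rule dle)
  also have "\<dots> \<le> Max (Lg ` {1..n}) * Z / \<mu>"
  proof (rule divide_right_mono)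
    show "Lg i * Z \<le> Max (Lg ` {1..n}) * Z" by (rule mult_right_mono[OF LM Z])
  qed (rule less_imp_le[OF mu_pos])
  also have "\<dots> = Max (Lg ` {1..n}) * Z * (1 / \<mu>)" by simp
  also have "\<dots> \<le> Max (Lg ` {1..n}) * Z * (\<mu> / (\<mu>\<^sup>2 + La\<^sup>2) * inverse (1 - La / sqrt (\<mu>\<^sup>2 + La\<^sup>2)))"
    by (rule mult_left_mono[OF coef_bound[OF mu_pos La_pos]], rule mult_nonneg_nonneg[OF M0 Z])
  also have "\<dots> = (\<mu> * Max (Lg ` {1..n}) / (\<mu>\<^sup>2 + La\<^sup>2)
         * inverse (1 - La / sqrt (\<mu>\<^sup>2 + La\<^sup>2))) * Z" by (simp add: mult_ac)
  finally show ?thesis .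
qed

theorem lemma9:
  fixes n :: nat
    and f :: "nat \<Rightarrow> 'a::euclidean_space \<Rightarrow> 'a \<Rightarrow> real"
    and r :: "nat \<Rightarrow> 'a \<Rightarrow> ereal"
    and g :: "nat \<Rightarrow> 'a \<Rightarrow> 'a \<Rightarrow> 'a"
    and La \<mu> :: real
    and Lg :: "nat \<Rightarrow> real"
  assumes mu_pos: "\<mu> > 0"
    and La_pos: "La > 0"
    \<comment> \<open>(i)\<close>
    and r_proper: "\<And>i x. i \<in> {1..n} \<Longrightarrow> r i x \<noteq> -\<infinity>"
    and r_lsc: "\<And>i. i \<in> {1..n} \<Longrightarrow> lsc_fun (r i)"
    and r_convex: "\<And>i. i \<in> {1..n} \<Longrightarrow> convex_ext (r i)"
    and r_dom: "\<And>i. i \<in> {1..n} \<Longrightarrow> compact (eff_dom (r i))"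
    \<comment> \<open>(ii) with g the gradient: C^2 on an open neighbourhood of R_i, and convex on R_i\<close>
    and f_C2: "\<And>i y. i \<in> {1..n} \<Longrightarrow>
       \<exists>U H. open U \<and> eff_dom (r i) \<subseteq> U \<and>
         (\<forall>x\<in>U. ((\<lambda>x. f i x (x + y)) has_derivative (\<lambda>h. g i x y \<bullet> h)) (at x)) \<and>
         (\<forall>x\<in>U. ((\<lambda>x. g i x y) has_derivative blinfun_apply (H x)) (at x)) \<and>
         continuous_on U (H :: 'a \<Rightarrow> 'a \<Rightarrow>\<^sub>L 'a)"
    and f_convex: "\<And>i y. i \<in> {1..n} \<Longrightarrow> convex_on (eff_dom (r i)) (\<lambda>x. f i x (x + y))"
    \<comment> \<open>(iii)\<close>
    and g_lip_x: "\<And>i y x x'. i \<in> {1..n} \<Longrightarrow> x \<in> eff_dom (r i) \<Longrightarrow> x' \<in> eff_dom (r i) \<Longrightarrow>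
       norm (g i x y - g i x' y) \<le> La * norm (x - x')"
    \<comment> \<open>(iv)\<close>
    and g_lip_y: "\<And>i x y1 y2. i \<in> {1..n} \<Longrightarrow> x \<in> eff_dom (r i) \<Longrightarrow>
       norm (g i x y1 - g i x y2) \<le> Lg i * norm (y1 - y2)"
    and i: "i \<in> {1..n}"
    and y: "y \<in> eff_dom (r i)"
  shows "norm (best_resp f r \<mu> i y z1 - best_resp f r \<mu> i y z2)
     \<le> (\<mu> * Max (Lg ` {1..n}) / (\<mu>\<^sup>2 + La\<^sup>2)
         * inverse (1 - La / sqrt (\<mu>\<^sup>2 + La\<^sup>2))) * norm (z1 - z2)"
proof -
  define K where "K = eff_dom (r i)"
  define w1 where "w1 = z1 - y"
  define w2 where "w2 = z2 - y"
  define h1 where "h1 x = f i x (x + w1)" for x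
  define h2 where "h2 x = f i x (x + w2)" for x
  define T1 where "T1 = best_resp f r \<mu> i y z1"
  define T2 where "T2 = best_resp f r \<mu> i y z2"
  define \<rho> where "\<rho> x = real_of_ereal (r i x)" for x
  define q where "q x = \<mu> / 2 * (norm (x - y))\<^sup>2" for x
  define Z where "Z = norm (z1 - z2)"
  have wZ: "norm (w1 - w2) = Z" by (simp add: w1_def w2_def Z_def)
  obtain U1 H1 where U1: "open U1" "K \<subseteq> U1"
      "\<forall>x\<in>U1. (h1 has_derivative (\<lambda>h. g i x w1 \<bullet> h)) (at x)"
    using f_C2[OF i, of w1] unfolding K_def h1_def by blast
  obtain U2 H2 where U2: "open U2" "K \<subseteq> U2"
      "\<forall>x\<in>U2. (h2 has_derivative (\<lambda>h. g i x w2 \<bullet> h)) (at x)"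
    using f_C2[OF i, of w2] unfolding K_def h2_def by blast
  have hc1: "continuous_on K h1"
    using U1 by (intro continuous_at_imp_continuous_on) (auto dest: has_derivative_continuous)
  have hc2: "continuous_on K h2"
    using U2 by (intro continuous_at_imp_continuous_on) (auto dest: has_derivative_continuous)
  have M1: "T1 \<in> K \<and> (\<forall>x'\<in>K. h1 x' + \<rho> x' + q x' \<ge> h1 T1 + \<rho> T1 + q T1 + \<mu> / 2 * (norm (x' - T1))\<^sup>2)"
  proof -
    have c: "continuous_on (eff_dom (r i)) (\<lambda>x. f i x (x + (z1 - y)))" using hc1 by (simp add: K_def h1_def w1_def)
    note bm = best_min[OF r_proper[OF i] r_lsc[OF i] r_convex[OF i] r_dom[OF i] y c f_convex[OF i, of "z1 - y"] mu_pos]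
    show ?thesis unfolding T1_def best_resp_eq K_def h1_def \<rho>_def q_def w1_def by (rule bm)
  qed
  have M2: "T2 \<in> K \<and> (\<forall>x'\<in>K. h2 x' + \<rho> x' + q x' \<ge> h2 T2 + \<rho> T2 + q T2 + \<mu> / 2 * (norm (x' - T2))\<^sup>2)"
  proof -
    have c: "continuous_on (eff_dom (r i)) (\<lambda>x. f i x (x + (z2 - y)))" using hc2 by (simp add: K_def h2_def w2_def)
    note bm = best_min[OF r_proper[OF i] r_lsc[OF i] r_convex[OF i] r_dom[OF i] y c f_convex[OF i, of "z2 - y"] mu_pos]
    show ?thesis unfolding T2_def best_resp_eq K_def h2_def \<rho>_def q_def w2_def by (rule bm)
  qed
  define d where "d = norm (T1 - T2)"
  have a: "\<mu> * d\<^sup>2 \<le> (h1 T2 - h2 T2) - (h1 T1 - h2 T1)"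
  proof -
    have nd': "norm (T2 - T1) = d" by (simp add: d_def norm_minus_commute)
    have P1: "h1 T2 + \<rho> T2 + q T2 \<ge> h1 T1 + \<rho> T1 + q T1 + \<mu> / 2 * d\<^sup>2"
      using bspec[OF conjunct2[OF M1] conjunct1[OF M2]] unfolding nd' .
    have P2: "h2 T1 + \<rho> T1 + q T1 \<ge> h2 T2 + \<rho> T2 + q T2 + \<mu> / 2 * d\<^sup>2"
      using bspec[OF conjunct2[OF M2] conjunct1[OF M1]] unfolding d_def .
    have h: "\<mu> / 2 * d\<^sup>2 + \<mu> / 2 * d\<^sup>2 = \<mu> * d\<^sup>2" by simp
    show ?thesis using P1 P2 h by linarith
  qed
  have Lg0: "Lg i \<ge> 0"
  proof -
    obtain v :: 'a where vB: "v \<in> Basis" using nonempty_Basis by blast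
    have v: "norm v = 1" using vB by (rule norm_Basis)
    have "norm (g i y v - g i y 0) \<le> Lg i * norm (v - 0)" using g_lip_y[OF i y] .
    then have "0 \<le> Lg i * norm (v - 0)" using norm_ge_zero[of "g i y v - g i y 0"] by linarith
    then show ?thesis using v by (simp only: diff_zero mult_1_right)
  qed
  have B0: "Lg i * Z \<ge> 0" using Lg0 unfolding Z_def by (rule mult_nonneg_nonneg) (rule norm_ge_zero)
  have Kc: "convex K" unfolding K_def by (rule dom_convex[OF r_proper[OF i] r_convex[OF i]])
  have derK: "((\<lambda>x. h1 x - h2 x) has_derivative (\<lambda>v. g i x w1 \<bullet> v - g i x w2 \<bullet> v)) (at x within K)"
    if xK: "x \<in> K" for x
  proof -
    have x1: "x \<in> U1" using U1(2) xK by (rule subsetD)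
    have x2: "x \<in> U2" using U2(2) xK by (rule subsetD)
    have d1: "(h1 has_derivative (\<lambda>h. g i x w1 \<bullet> h)) (at x)" using U1(3) x1 by (rule bspec)
    have d2: "(h2 has_derivative (\<lambda>h. g i x w2 \<bullet> h)) (at x)" using U2(3) x2 by (rule bspec)
    show ?thesis using has_derivative_diff[OF d1 d2] by (rule has_derivative_at_withinI)
  qed
  have onK: "onorm (\<lambda>v. g i x w1 \<bullet> v - g i x w2 \<bullet> v) \<le> Lg i * Z" if xK: "x \<in> K" for x
  proof (rule onorm_bound[OF B0])
    fix v
    have gl: "norm (g i x w1 - g i x w2) \<le> Lg i * Z"
      using g_lip_y[OF i xK[unfolded K_def], of w1 w2] unfolding wZ .
    have "norm (g i x w1 \<bullet> v - g i x w2 \<bullet> v) = \<bar>(g i x w1 - g i x w2) \<bullet> v\<bar>"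
      by (simp only: real_norm_def inner_diff_left)
    also have "\<dots> \<le> norm (g i x w1 - g i x w2) * norm v" by (rule Cauchy_Schwarz_ineq2)
    also have "\<dots> \<le> Lg i * Z * norm v" using gl norm_ge_zero by (rule mult_right_mono)
    finally show "norm (g i x w1 \<bullet> v - g i x w2 \<bullet> v) \<le> Lg i * Z * norm v" .
  qed
  have mvt: "norm ((h1 T2 - h2 T2) - (h1 T1 - h2 T1)) \<le> Lg i * Z * norm (T2 - T1)"
    using differentiable_bound[OF Kc derK onK conjunct1[OF M2] conjunct1[OF M1]] by simp
  have X: "(h1 T2 - h2 T2) - (h1 T1 - h2 T1) \<le> norm ((h1 T2 - h2 T2) - (h1 T1 - h2 T1))"
    unfolding real_norm_def by (rule abs_ge_self)
  have nd: "norm (T2 - T1) = d" unfolding d_def by (rule norm_minus_commute)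
  have dd0: "\<mu> * d\<^sup>2 \<le> Lg i * Z * d"
    using order_trans[OF a order_trans[OF X mvt[unfolded nd]]] .
  have sq: "(\<mu> * d) * d = \<mu> * d\<^sup>2" by (simp only: power2_eq_square mult.assoc)
  have dd: "(\<mu> * d) * d \<le> (Lg i * Z) * d"
    using dd0 unfolding sq .
  have dle: "\<mu> * d \<le> Lg i * Z"
  proof (cases "d = 0")
    case True then show ?thesis using B0 by simp
  next
    case False
    then have "d > 0" using norm_ge_zero[of "T1 - T2"] unfolding d_def by linarith
    show ?thesis using mult_right_le_imp_le[OF dd \<open>d > 0\<close>] .
  qed
  have "d \<le> (\<mu> * Max (Lg ` {1..n}) / (\<mu>\<^sup>2 + La\<^sup>2) * inverse (1 - La / sqrt (\<mu>\<^sup>2 + La\<^sup>2))) * Z"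
  proof -
    have Z0: "0 \<le> Z" unfolding Z_def by (rule norm_ge_zero)
    show ?thesis by (rule final_bound[where Lg=Lg and i=i and n=n, OF i Lg0 mu_pos La_pos dle Z0])
  qed
  then show ?thesis unfolding d_def T1_def T2_def Z_def .
qed

end
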